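(* Assume that $Q$ spans $E$ as a vector space, that $f$ is surjective, and that $R\cap f^{-1}(C)$ and $f^{-1}(C)$ span the same vector subspace of $E$. Then there exist $y_0\in\mathbb{R}^n$ and $c\in\mathbb{R}$ such that for every $y\in f(R)+C$: $$b_{Q,f,\ell,C}(y-y_0)-c\;\le\;b'_{Q,R,f,\ell,C}(y)\;\le\;b_{Q,f,\ell,C}(y),$$ with the conventions $-\infty-c=-\infty$, $+\infty-c=+\infty$.
   Context: $E$ is a finite-dimensional Euclidean space, $Q\subset E$ a convex cone (nonempty, stable under addition and multiplication by nonnegative reals), $f:E\to\mathbb{R}^n$ a linear map, $\ell:E\to\mathbb{R}$ a linear form, $C\subset\mathbb{R}^n$ a convex cone, and $R\subset E$ a lattice (an additive subgroup generated by a basis of $E$). Define $b_{Q,f,\ell,C}(y)=\sup\{\ell(x):x\in Q,\ y-f(x)\in C\}$ and $b'_{Q,R,f,\ell,C}(y)=\sup\{\ell(x):x\in Q\cap R,\ y-f(x)\in C\}$ for $y\in\mathbb{R}^n$, with $\sup\emptyset=-\infty$ and the supremum of an unbounded set equal to $+\infty$. $f(R)+C=\{f(r)+c:r\in R,c\in C\}$. *)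

theory Defs
  imports "HOL-Analysis.Analysis"
begin

definition is_lattice :: "'a::euclidean_space set \<Rightarrow> bool" where
  "is_lattice R \<longleftrightarrow> (\<exists>B. finite B \<and> independent B \<and> span B = UNIV \<and>
      R = {\<Sum>b\<in>B. of_int (k b) *\<^sub>R b | k. True})"

text \<open>Value function b_{Q,f,l,C}: supremum in the extended reals
  (Sup of the empty set is -infinity, of an unbounded set +infinity).\<close>
definition bval :: "'a::euclidean_space set \<Rightarrow> ('a \<Rightarrow> 'b::real_vector) \<Rightarrow> ('a \<Rightarrow> real)
    \<Rightarrow> 'b set \<Rightarrow> 'b \<Rightarrow> ereal" where
  "bval Q f l C y = Sup {ereal (l x) | x. x \<in> Q \<and> y - f x \<in> C}"

definition bval_int :: "'a::euclidean_space set \<Rightarrow> 'a set \<Rightarrow> ('a \<Rightarrow> 'b::real_vector)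
    \<Rightarrow> ('a \<Rightarrow> real) \<Rightarrow> 'b set \<Rightarrow> 'b \<Rightarrow> ereal" where
  "bval_int Q R f l C y = Sup {ereal (l x) | x. x \<in> Q \<inter> R \<and> y - f x \<in> C}"

end

theory Submission
  imports Defs
begin

lemma lat_grp:
  assumes "is_lattice R"
  shows "0 \<in> R" "\<And>x y. x \<in> R \<Longrightarrow> y \<in> R \<Longrightarrow> x + y \<in> R"
        "\<And>x n. x \<in> R \<Longrightarrow> of_int n *\<^sub>R x \<in> R"
proof -
  obtain B where R: "R = {\<Sum>b\<in>B. of_int (k b) *\<^sub>R b | k. True}"
    using assms unfolding is_lattice_def by blast
  show "0 \<in> R" unfolding R by (rule CollectI, rule exI[of _ "\<lambda>_. 0"]) simp
  show "x + y \<in> R" if xy: "x \<in> R" "y \<in> R" for x y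
  proof -
    obtain k1 k2 where "x = (\<Sum>b\<in>B. of_int (k1 b) *\<^sub>R b)" "y = (\<Sum>b\<in>B. of_int (k2 b) *\<^sub>R b)"
      using xy unfolding R by blast
    then have "x + y = (\<Sum>b\<in>B. of_int (k1 b + k2 b) *\<^sub>R b)"
      by (simp add: sum.distrib scaleR_add_left)
    then show ?thesis unfolding R by (intro CollectI exI[of _ "\<lambda>b. k1 b + k2 b"]) simp
  qed
  show "of_int n *\<^sub>R x \<in> R" if xr: "x \<in> R" for x n
  proof -
    obtain k1 where "x = (\<Sum>b\<in>B. of_int (k1 b) *\<^sub>R b)"
      using xr unfolding R by blast
    then have "of_int n *\<^sub>R x = (\<Sum>b\<in>B. of_int (n * k1 b) *\<^sub>R b)"
      by (simp add: scaleR_sum_right)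
    then show ?thesis unfolding R by (intro CollectI exI[of _ "\<lambda>b. n * k1 b"]) simp
  qed
qed

lemma lat_sum:
  assumes "is_lattice R" "finite B" "B \<subseteq> R"
  shows "(\<Sum>b\<in>B. of_int (m b) *\<^sub>R b) \<in> R"
  using assms(2,3)
proof (induction B rule: finite_induct)
  case empty then show ?case using lat_grp[OF assms(1)] by simp
next
  case (insert x F) then show ?case using lat_grp[OF assms(1)] by simp
qed

lemma cone_sum:
  assumes "convex_cone C" "finite B" "\<And>b. b \<in> B \<Longrightarrow> g b \<ge> 0 \<and> v b \<in> C"
  shows "(\<Sum>b\<in>B. g b *\<^sub>R v b) \<in> C"
  using assms(2,3)
proof (induction B rule: finite_induct)
  case empty then show ?case using assms(1) by (simp add: convex_cone_iff)
next
  case (insert x F) then show ?case using assms(1) by (simp add: convex_cone_iff)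
qed

lemma cone_deep:
  fixes Q :: "'a::euclidean_space set"
  assumes "convex_cone Q" "span Q = UNIV" "M \<ge> 0"
  shows "\<exists>w. \<forall>v. norm v \<le> M \<longrightarrow> w + v \<in> Q"
proof -
  have Q0: "0 \<in> Q" using assms(1) by (simp add: convex_cone_iff)
  have "affine hull Q = span Q" by (rule affine_hull_span_0) (simp add: Q0 hull_inc)
  then have "rel_interior Q = interior Q" using assms(2) rel_interior_interior by auto
  moreover have "rel_interior Q \<noteq> {}" using assms(1) Q0 rel_interior_eq_empty
    by (auto simp: convex_cone_def)
  ultimately obtain q where "q \<in> interior Q" by auto
  then obtain e where e: "e > 0" "ball q e \<subseteq> Q" using mem_interior by blast
  define s where "s = (M + 1) / e"
  have s: "s > 0" using e assms(3) by (simp add: s_def)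
  show ?thesis
  proof (intro exI allI impI)
    fix v :: 'a assume v: "norm v \<le> M"
    have "norm ((1/s) *\<^sub>R v) = norm v / s" using s by simp
    also have "\<dots> \<le> M / s" using v s by (simp add: divide_right_mono)
    also have "\<dots> < e" using s e assms(3) by (simp add: s_def field_simps)
    finally have "q + (1/s) *\<^sub>R v \<in> Q" using e(2) by (auto simp: dist_norm)
    then have "s *\<^sub>R (q + (1/s) *\<^sub>R v) \<in> Q" using assms(1) s by (simp add: convex_cone_iff)
    then show "s *\<^sub>R q + v \<in> Q" using s by (simp add: scaleR_add_right)
  qed
qed


theorem proposition2p3:
  fixes Q R :: "'a::euclidean_space set"
    and f :: "'a \<Rightarrow> real^'n"
    and l :: "'a \<Rightarrow> real"
    and C :: "(real^'n) set"
  assumes "convex_cone Q"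
    and "linear f"
    and "linear l"
    and "convex_cone C"
    and "is_lattice R"
    and "span Q = UNIV"
    and "surj f"
    and "span (R \<inter> f -` C) = span (f -` C)"
  shows "\<exists>y0 c. \<forall>y \<in> {f r + z | r z. r \<in> R \<and> z \<in> C}.
           bval Q f l C (y - y0) - ereal c \<le> bval_int Q R f l C y \<and>
           bval_int Q R f l C y \<le> bval Q f l C y"
proof -
  note Qc = assms(1) and fl = assms(2) and ll = assms(3) and Cc = assms(4)
    and lat = assms(5)
  obtain B where B: "B \<subseteq> R \<inter> f -` C" "independent B" "R \<inter> f -` C \<subseteq> span B"
    using maximal_independent_subset by blast
  have finB: "finite B" using B(2) finiteI_independent by blast
  have spanB: "span (f -` C) \<subseteq> span B"
    using B(3) assms(8) by (metis span_minimal subspace_span)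
  define M where "M = (\<Sum>b\<in>B. norm b)"
  have M0: "M \<ge> 0" unfolding M_def by (simp add: sum_nonneg)
  obtain w where w: "\<And>v. norm v \<le> M \<Longrightarrow> w + v \<in> Q"
    using cone_deep[OF Qc assms(6) M0] by blast
  obtain K where K: "\<And>x. norm (l x) \<le> K * norm x" using linear_bounded[OF ll] by blast
  define c where "c = \<bar>K\<bar> * M - l w"
  have C0: "0 \<in> C" using Cc by (simp add: convex_cone_iff)
  show ?thesis
  proof (intro exI ballI conjI)
    fix y assume "y \<in> {f r + z | r z. r \<in> R \<and> z \<in> C}"
    then obtain r0 z0 where y: "y = f r0 + z0" "r0 \<in> R" "z0 \<in> C" by blast
    let ?T = "{ereal (l x) | x. x \<in> Q \<inter> R \<and> y - f x \<in> C}"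
    show "bval_int Q R f l C y \<le> bval Q f l C y"
      unfolding bval_int_def bval_def by (rule Sup_subset_mono) blast
    have "bval Q f l C (y - f w) \<le> Sup ?T + ereal c"
      unfolding bval_def
    proof (rule Sup_least)
      fix s assume "s \<in> {ereal (l x) | x. x \<in> Q \<and> y - f w - f x \<in> C}"
      then obtain x where x: "s = ereal (l x)" "x \<in> Q" "y - f w - f x \<in> C" by blast
      define z where "z = y - f w - f x"
      define d where "d = r0 - x - w"
      have "f d = f r0 - f x - f w" unfolding d_def by (simp add: linear_diff[OF fl])
      then have fd: "f d = z - z0" unfolding z_def y by (simp add: algebra_simps)
      obtain u1 u2 where u: "f u1 = z" "f u2 = z0" using assms(7) by (metis surjD)
      have "f (d - u1 + u2) = 0" using fd u linear_diff[OF fl] linear_add[OF fl] by simp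
      then have "d - u1 + u2 \<in> f -` C" using C0 by simp
      moreover have "u1 \<in> f -` C" "u2 \<in> f -` C" using u x(3) y(3) z_def by auto
      ultimately have "(d - u1 + u2) + u1 - u2 \<in> span (f -` C)"
        by (meson span_add span_diff span_base)
      then have "d \<in> span B" using spanB by auto
      then obtain a where a: "d = (\<Sum>b\<in>B. a b *\<^sub>R b)" using span_finite[OF finB] by auto
      define lam where "lam = (\<Sum>b\<in>B. of_int (ceiling (a b)) *\<^sub>R b)"
      define g where "g b = of_int (ceiling (a b)) - a b" for b
      define q where "q = (\<Sum>b\<in>B. g b *\<^sub>R b)"
      have g: "0 \<le> g b" "g b \<le> 1" for b unfolding g_def
        by (simp_all add: le_of_int_ceiling) (linarith)
      have dq: "d = lam - q" unfolding a lam_def q_def g_def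
        by (simp add: sum_subtractf[symmetric] scaleR_diff_left)
      have lamR: "lam \<in> R" unfolding lam_def using lat_sum[OF lat finB] B(1) by auto
      define r where "r = r0 - lam"
      have rx: "r = x + (w - q)" unfolding r_def using dq d_def by (simp add: algebra_simps)
      have rR: "r \<in> R" unfolding r_def using lat_grp(2,3)[OF lat] lamR y(2)
        by (metis add_uminus_conv_diff of_int_minus of_int_1 scaleR_minus1_left)
      have nq: "norm q \<le> M" unfolding q_def M_def
      proof -
        have "norm (\<Sum>b\<in>B. g b *\<^sub>R b) \<le> (\<Sum>b\<in>B. norm (g b *\<^sub>R b))" by (rule norm_sum)
        also have "\<dots> \<le> (\<Sum>b\<in>B. norm b)"
          using g by (intro sum_mono) (simp add: mult_left_le_one_le)
        finally show "norm (\<Sum>b\<in>B. g b *\<^sub>R b) \<le> (\<Sum>b\<in>B. norm b)" .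
      qed
      have "w + - q \<in> Q" using w[of "- q"] nq by simp
      then have rQ: "r \<in> Q" unfolding rx using convex_cone_add[OF Qc x(2)] by simp
      have fq: "f q = (\<Sum>b\<in>B. g b *\<^sub>R f b)" unfolding q_def
        by (simp add: linear_sum[OF fl] linear_scale[OF fl])
      have fqC: "f q \<in> C" unfolding fq using g B(1) by (intro cone_sum[OF Cc finB]) auto
      have eq: "y - f r = z + f q" unfolding rx z_def
        using linear_add[OF fl] linear_diff[OF fl] by (simp add: algebra_simps)
      have "z + f q \<in> C" using convex_cone_add[OF Cc] x(3) fqC unfolding z_def by blast
      then have rC: "y - f r \<in> C" by (simp only: eq)
      have "l q \<le> \<bar>K\<bar> * M"
      proof -
        have "l q \<le> norm (l q)" by simp
        also have "\<dots> \<le> K * norm q" by (rule K)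
        also have "\<dots> \<le> \<bar>K\<bar> * M" using nq
          by (metis abs_ge_self abs_ge_zero mult_mono norm_ge_zero order.trans)
        finally show ?thesis .
      qed
      then have "l x \<le> l r + c" unfolding rx c_def
        using linear_add[OF ll] linear_diff[OF ll] by simp
      then have "s \<le> ereal (l r) + ereal c" using x(1) by simp
      also have "ereal (l r) \<le> Sup ?T" using rQ rR rC by (intro Sup_upper) blast
      then have "ereal (l r) + ereal c \<le> Sup ?T + ereal c" by (rule add_right_mono)
      finally show "s \<le> Sup ?T + ereal c" .
    qed
    then show "bval Q f l C (y - f w) - ereal c \<le> bval_int Q R f l C y"
      unfolding bval_int_def by (simp add: ereal_minus_le)
  qed
qed

end
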